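(* In the setting of the cascaded network $\mathrm{GradNetC}$ (defined by $\boldsymbol{z}_0=\boldsymbol{\beta}_0\odot\boldsymbol{W}\boldsymbol{x}+\boldsymbol{b}_0$, $\boldsymbol{z}_\ell=\boldsymbol{\beta}_\ell\odot\boldsymbol{W}\boldsymbol{x}+\boldsymbol{\alpha}_\ell\odot\sigma_\ell(\boldsymbol{z}_{\ell-1})+\boldsymbol{b}_\ell$ for $1\le\ell\le L-1$, and $\mathrm{GradNetC}(\boldsymbol{x})=\boldsymbol{W}^\top[\boldsymbol{\alpha}_L\odot\sigma_L(\boldsymbol{z}_{L-1})]+\boldsymbol{b}_L$, with $\boldsymbol{W}\in\mathbb{R}^{n\times d}$, $\boldsymbol{\alpha}_\ell,\boldsymbol{\beta}_\ell,\boldsymbol{b}_\ell\in\mathbb{R}^n$, $\boldsymbol{b}_L\in\mathbb{R}^d$), suppose that all $\boldsymbol{\alpha}_\ell$ ($1\le\ell\le L$) and $\boldsymbol{\beta}_\ell$ ($0\le\ell\le L-1$) have nonnegative entries and each $\sigma_\ell$ is a differentiable, monotonically increasing elementwise activation. Then $\mathrm{GradNetC}$ is the gradient of a convex continuously differentiable function on $\mathbb{R}^d$, i.e. an mGradNet.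
   Context: $\odot$ is the entrywise product. An elementwise activation $\sigma:\mathbb{R}^n\to\mathbb{R}^n$ has the form $\sigma(\boldsymbol{z})=(s_1(z_1),\dots,s_n(z_n))$; it is monotonically increasing if each $s_j$ is. An mGradNet is a function $f:\mathbb{R}^d\to\mathbb{R}^d$ with $f=\nabla F$ for some convex continuously differentiable $F:\mathbb{R}^d\to\mathbb{R}$. *)

theory Defs
  imports "HOL-Analysis.Analysis"
begin

definition hadamard :: "real^'n \<Rightarrow> real^'n \<Rightarrow> real^'n" (infixl "\<odot>" 70) where
  "u \<odot> v = (\<chi> j. u $ j * v $ j)"

definition elementwise :: "('n \<Rightarrow> real \<Rightarrow> real) \<Rightarrow> real^'n \<Rightarrow> real^'n" where
  "elementwise s z = (\<chi> j. s j (z $ j))"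

text \<open>Hidden states z_l of the cascaded network GradNetC.
  sig l j is the j-th scalar component of the activation sigma_l.\<close>
fun gradnetC_z ::
  "real^'d^'n \<Rightarrow> (nat \<Rightarrow> real^'n) \<Rightarrow> (nat \<Rightarrow> real^'n) \<Rightarrow> (nat \<Rightarrow> real^'n)
   \<Rightarrow> (nat \<Rightarrow> 'n \<Rightarrow> real \<Rightarrow> real) \<Rightarrow> real^'d \<Rightarrow> nat \<Rightarrow> real^'n" where
  "gradnetC_z W alpha beta b sig x 0 = beta 0 \<odot> (W *v x) + b 0"
| "gradnetC_z W alpha beta b sig x (Suc l) =
     beta (Suc l) \<odot> (W *v x)
     + alpha (Suc l) \<odot> elementwise (sig (Suc l)) (gradnetC_z W alpha beta b sig x l)
     + b (Suc l)"

definition gradnetC ::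
  "nat \<Rightarrow> real^'d^'n \<Rightarrow> (nat \<Rightarrow> real^'n) \<Rightarrow> (nat \<Rightarrow> real^'n) \<Rightarrow> (nat \<Rightarrow> real^'n)
   \<Rightarrow> real^'d \<Rightarrow> (nat \<Rightarrow> 'n \<Rightarrow> real \<Rightarrow> real) \<Rightarrow> real^'d \<Rightarrow> real^'d" where
  "gradnetC L W alpha beta b bL sig x =
     transpose W *v (alpha L \<odot> elementwise (sig L) (gradnetC_z W alpha beta b sig x (L - 1))) + bL"

text \<open>mGradNet: f is the gradient of a convex continuously differentiable F.
  F has Frechet derivative h \<mapsto> f x \<bullet> h at each x; continuity of this
  derivative in x is continuity of f.\<close>
definition mGradNet :: "('a::euclidean_space \<Rightarrow> 'a) \<Rightarrow> bool" where
  "mGradNet f \<longleftrightarrow> (\<exists>F :: 'a \<Rightarrow> real. convex_on UNIV F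
      \<and> (\<forall>x. (F has_derivative (\<lambda>h. f x \<bullet> h)) (at x))
      \<and> continuous_on UNIV f)"

end

theory Submission
  imports Defs
begin

fun gC :: "(nat \<Rightarrow> real^'n) \<Rightarrow> (nat \<Rightarrow> real^'n) \<Rightarrow> (nat \<Rightarrow> real^'n)
   \<Rightarrow> (nat \<Rightarrow> 'n \<Rightarrow> real \<Rightarrow> real) \<Rightarrow> nat \<Rightarrow> 'n \<Rightarrow> real \<Rightarrow> real" where
  "gC alpha beta b sig 0 j t = beta 0 $ j * t + b 0 $ j"
| "gC alpha beta b sig (Suc l) j t = beta (Suc l) $ j * t
     + alpha (Suc l) $ j * sig (Suc l) j (gC alpha beta b sig l j t) + b (Suc l) $ j"

lemma z_comp: "gradnetC_z W alpha beta b sig x l $ j = gC alpha beta b sig l j ((W *v x) $ j)"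
  by (induction l) (simp_all add: hadamard_def elementwise_def)

lemma gC_props:
  assumes "\<And>k. 1 \<le> k \<Longrightarrow> k \<le> m \<Longrightarrow> continuous_on UNIV (sig k j) \<and> mono (sig k j)"
    and "\<And>k. k \<le> m \<Longrightarrow> beta k $ j \<ge> 0"
    and "\<And>k. 1 \<le> k \<Longrightarrow> k \<le> m \<Longrightarrow> alpha k $ j \<ge> 0"
  shows "l \<le> m \<Longrightarrow> continuous_on UNIV (gC alpha beta b sig l j) \<and> mono (gC alpha beta b sig l j)"
proof (induction l)
  case 0
  have e: "gC alpha beta b sig 0 j = (\<lambda>t. beta 0 $ j * t + b 0 $ j)" by (rule ext) simp
  have "mono (gC alpha beta b sig 0 j)"
    unfolding e using assms(2)[of 0] by (auto intro!: monoI mult_left_mono)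
  moreover have "continuous_on UNIV (gC alpha beta b sig 0 j)"
    unfolding e by (intro continuous_intros)
  ultimately show ?case by blast
next
  case (Suc l)
  then have IH: "continuous_on UNIV (gC alpha beta b sig l j)" "mono (gC alpha beta b sig l j)" by auto
  have s: "continuous_on UNIV (sig (Suc l) j)" "mono (sig (Suc l) j)" using assms(1)[of "Suc l"] Suc by auto
  have e: "gC alpha beta b sig (Suc l) j = (\<lambda>t. beta (Suc l) $ j * t
     + alpha (Suc l) $ j * sig (Suc l) j (gC alpha beta b sig l j t) + b (Suc l) $ j)" by (rule ext) simp
  have cc: "continuous_on UNIV (\<lambda>t. sig (Suc l) j (gC alpha beta b sig l j t))"
    by (rule continuous_on_compose2[OF s(1) IH(1)]) auto
  have c: "continuous_on UNIV (gC alpha beta b sig (Suc l) j)"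
    unfolding e by (intro continuous_intros cc)
  have "mono (gC alpha beta b sig (Suc l) j)"
  proof (rule monoI)
    fix x y :: real assume "x \<le> y"
    have "beta (Suc l) $ j * x \<le> beta (Suc l) $ j * y"
      using assms(2)[of "Suc l"] Suc.prems \<open>x \<le> y\<close> by (auto intro: mult_left_mono)
    moreover have "sig (Suc l) j (gC alpha beta b sig l j x) \<le> sig (Suc l) j (gC alpha beta b sig l j y)"
      using IH(2) s(2) \<open>x \<le> y\<close> by (auto dest: monoD)
    then have "alpha (Suc l) $ j * sig (Suc l) j (gC alpha beta b sig l j x) \<le> alpha (Suc l) $ j * sig (Suc l) j (gC alpha beta b sig l j y)"
      using assms(3)[of "Suc l"] Suc.prems by (auto intro: mult_left_mono)
    ultimately show "gC alpha beta b sig (Suc l) j x \<le> gC alpha beta b sig (Suc l) j y" by simp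
  qed
  with c show ?case by blast
qed

lemma antideriv:
  fixes h :: "real \<Rightarrow> real"
  assumes "continuous_on UNIV h"
  shows "\<exists>H. \<forall>t. (H has_real_derivative h t) (at t)"
proof -
  have "\<exists>F. \<forall>x :: real. -\<infinity> < ereal x \<longrightarrow> ereal x < \<infinity> \<longrightarrow> (F has_vector_derivative h x) (at x)"
    by (rule einterval_antiderivative) (use assms in \<open>auto simp: continuous_on_eq_continuous_at\<close>)
  then show ?thesis by (auto simp: has_real_derivative_iff_has_vector_derivative)
qed

theorem corollary4:
  fixes L :: nat
    and W :: "real^'d^'n"
    and alpha beta b :: "nat \<Rightarrow> real^'n"
    and bL :: "real^'d"
    and sig :: "nat \<Rightarrow> 'n \<Rightarrow> real \<Rightarrow> real"
  assumes "L \<ge> 1"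
    and "\<And>l j. 1 \<le> l \<Longrightarrow> l \<le> L \<Longrightarrow> alpha l $ j \<ge> 0"
    and "\<And>l j. l \<le> L - 1 \<Longrightarrow> beta l $ j \<ge> 0"
    and "\<And>l j t. 1 \<le> l \<Longrightarrow> l \<le> L \<Longrightarrow> sig l j differentiable (at t)"
    and "\<And>l j. 1 \<le> l \<Longrightarrow> l \<le> L \<Longrightarrow> mono (sig l j)"
  shows "mGradNet (gradnetC L W alpha beta b bL sig)"
proof -
  have sc: "continuous_on UNIV (sig k j)" if "1 \<le> k" "k \<le> L" for k j
    using assms(4)[OF that] by (simp add: continuous_at_imp_continuous_on differentiable_imp_continuous_within)
  define h where "h j t = alpha L $ j * sig L j (gC alpha beta b sig (L - 1) j t)" for j t
  have g: "continuous_on UNIV (gC alpha beta b sig (L - 1) j) \<and> mono (gC alpha beta b sig (L - 1) j)" for j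
    by (rule gC_props[where m="L - 1"]) (use sc assms in auto)
  have hc: "continuous_on UNIV (h j)" for j
  proof -
    have "continuous_on UNIV (\<lambda>t. sig L j (gC alpha beta b sig (L - 1) j t))"
      by (rule continuous_on_compose2[OF sc[of L j]]) (use g[of j] assms(1) in auto)
    then show ?thesis unfolding h_def[abs_def] by (intro continuous_intros)
  qed
  have hm: "h j s \<le> h j t" if "s \<le> t" for j s t
  proof -
    have "sig L j (gC alpha beta b sig (L - 1) j s) \<le> sig L j (gC alpha beta b sig (L - 1) j t)"
      using g[of j] assms(5)[of L j] assms(1) that by (auto dest: monoD)
    then show ?thesis unfolding h_def using assms(2)[of L j] assms(1) by (auto intro: mult_left_mono)
  qed
  have "\<forall>j. \<exists>H. \<forall>t. (H has_real_derivative h j t) (at t)" using antideriv[OF hc] by blast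
  then obtain H where H: "\<And>j t. (H j has_real_derivative h j t) (at t)" by metis
  have Hconv: "convex_on UNIV (H j)" for j
    by (rule convex_on_realI[where f'="h j"]) (use H hm in auto)
  have f_eq: "gradnetC L W alpha beta b bL sig x = transpose W *v (\<chi> j. h j (W $ j \<bullet> x)) + bL" for x
    unfolding gradnetC_def h_def
    by (simp add: hadamard_def elementwise_def z_comp matrix_vector_mul_component)
  define F where "F x = (\<Sum>j\<in>UNIV. H j (W $ j \<bullet> x)) + bL \<bullet> x" for x
  have conv: "convex_on UNIV F"
  proof (rule convex_onI)
    fix t :: real and x y :: "real^'d" assume t: "0 < t" "t < 1"
    have "H j (W $ j \<bullet> ((1 - t) *\<^sub>R x + t *\<^sub>R y)) \<le> (1 - t) * H j (W $ j \<bullet> x) + t * H j (W $ j \<bullet> y)" for j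
      using convex_onD[OF Hconv[of j], of t "W $ j \<bullet> x" "W $ j \<bullet> y"] t
      by (simp add: inner_add_right)
    then have "(\<Sum>j\<in>UNIV. H j (W $ j \<bullet> ((1 - t) *\<^sub>R x + t *\<^sub>R y))) \<le>
        (\<Sum>j\<in>UNIV. (1 - t) * H j (W $ j \<bullet> x) + t * H j (W $ j \<bullet> y))"
      by (rule sum_mono)
    moreover have "(\<Sum>j\<in>UNIV. (1 - t) * H j (W $ j \<bullet> x) + t * H j (W $ j \<bullet> y))
        = (1 - t) * (\<Sum>j\<in>UNIV. H j (W $ j \<bullet> x)) + t * (\<Sum>j\<in>UNIV. H j (W $ j \<bullet> y))"
      by (simp add: sum.distrib sum_distrib_left)
    moreover have "bL \<bullet> ((1 - t) *\<^sub>R x + t *\<^sub>R y) = (1 - t) * (bL \<bullet> x) + t * (bL \<bullet> y)"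
      by (simp add: inner_add_right)
    ultimately show "F ((1 - t) *\<^sub>R x + t *\<^sub>R y) \<le> (1 - t) * F x + t * F y"
      unfolding F_def by (simp add: algebra_simps)
  qed simp
  have der: "(F has_derivative (\<lambda>v. gradnetC L W alpha beta b bL sig x \<bullet> v)) (at x)" for x
  proof -
    have "(F has_derivative (\<lambda>v. (\<Sum>j\<in>UNIV. h j (W $ j \<bullet> x) * (W $ j \<bullet> v)) + bL \<bullet> v)) (at x)"
      unfolding F_def
      apply (intro derivative_intros)
      apply (rule has_derivative_compose[where g="H _", OF _ has_field_derivative_imp_has_derivative[OF H]])
       apply (rule bounded_linear_imp_has_derivative[OF bounded_linear_inner_right])
      done
    moreover have "(\<lambda>v. (\<Sum>j\<in>UNIV. h j (W $ j \<bullet> x) * (W $ j \<bullet> v)) + bL \<bullet> v) = (\<lambda>v. gradnetC L W alpha beta b bL sig x \<bullet> v)"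
    proof (rule ext)
      fix v :: "real^'d"
      define c where "c = (\<chi> j. h j (W $ j \<bullet> x))"
      have "(transpose W *v c + bL) \<bullet> v = c \<bullet> (W *v v) + bL \<bullet> v"
        by (simp add: inner_add_left dot_lmul_matrix)
      also have "c \<bullet> (W *v v) = (\<Sum>j\<in>UNIV. c $ j * (W *v v) $ j)"
        by (simp add: inner_vec_def)
      also have "\<dots> = (\<Sum>j\<in>UNIV. h j (W $ j \<bullet> x) * (W $ j \<bullet> v))"
        by (simp add: c_def matrix_vector_mul_component)
      finally show "(\<Sum>j\<in>UNIV. h j (W $ j \<bullet> x) * (W $ j \<bullet> v)) + bL \<bullet> v = gradnetC L W alpha beta b bL sig x \<bullet> v"
        unfolding f_eq c_def by simp
    qed
    ultimately show ?thesis by simp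
  qed
  have cont: "continuous_on UNIV (gradnetC L W alpha beta b bL sig)"
  proof -
    have "continuous_on UNIV (\<lambda>x. h j (W $ j \<bullet> x))" for j
      by (rule continuous_on_compose2[OF hc]) (auto intro: continuous_intros)
    then have "continuous_on UNIV (\<lambda>x::real^'d. \<chi> j. h j (W $ j \<bullet> x))"
      by (rule continuous_on_vec_lambda)
    then have "continuous_on UNIV (\<lambda>x. transpose W *v (\<chi> j. h j (W $ j \<bullet> x)))"
      by (rule continuous_on_compose2[OF matrix_vector_mult_linear_continuous_on]) auto
    then show ?thesis unfolding f_eq[abs_def] by (intro continuous_intros)
  qed
  show ?thesis unfolding mGradNet_def using conv der cont by blast
qed

end
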